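(* Let $d\ge1$, let $\Lambda\subset\mathbb{R}^{2d}$ be a lattice, let $r>0$ and let $\phi\in\ell^1(\Lambda)$ be non-negative with $$1-\delta\le\sum_{\lambda\in\Lambda}\phi(\lambda)\le1,\qquad\sum_{\lambda\in\Lambda}|\lambda|\,|\phi(\lambda)|<\infty$$ for some $0\le\delta\le1$. Then there exists a constant $C$ depending on $r$ such that $$\Vert\chi_\Omega-\chi_\Omega*_\Lambda\phi\Vert_{\ell^1(\Lambda)}\le C\Big(\sum_{\lambda\in\Lambda}|\lambda|\,|\phi(\lambda)|+1\Big)\#\partial^{r_\Lambda}_\Lambda\Omega+\delta\,\#(\Omega\cap\Lambda)$$ for every compact set $\Omega\subset\mathbb{R}^{2d}$, where $r_\Lambda=r+l_M$ and $l_M$ is the diameter of the fundamental domain of $\Lambda$.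
   Context: A lattice is $\Lambda=M\mathbb{Z}^{2d}$ with $M$ an invertible real $2d\times2d$ matrix; $l_M$ denotes the diameter of the (fixed) fundamental domain of $\Lambda$. The discrete convolution is $(a*_\Lambda b)(\lambda)=\sum_{\lambda'\in\Lambda}a(\lambda')b(\lambda-\lambda')$, and $\Vert c\Vert_{\ell^1(\Lambda)}=\sum_{\lambda\in\Lambda}|c(\lambda)|$; $\chi_\Omega$ is regarded as a function on $\Lambda$. $B(z,r)$ is the open ball; for $r>0$, $\partial^r_\Lambda\Omega=\Lambda\cap(\partial\Omega+B(0,r))$, and $\#$ denotes cardinality. *)

theory Defs
  imports "HOL-Analysis.Analysis"
begin

definition lattice :: "real^'n^'n \<Rightarrow> (real^'n) set" where
  "lattice M = range (\<lambda>k::int^'n. M *v (\<chi> i. of_int (k $ i)))"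

definition fund_domain :: "real^'n^'n \<Rightarrow> (real^'n) set" where
  "fund_domain M = (\<lambda>x. M *v x) ` {x. \<forall>i. 0 \<le> x $ i \<and> x $ i < 1}"

definition lM :: "real^'n^'n \<Rightarrow> real" where
  "lM M = diameter (fund_domain M)"

definition chi :: "(real^'n) set \<Rightarrow> real^'n \<Rightarrow> real" where
  "chi \<Omega> x = (if x \<in> \<Omega> then 1 else 0)"

definition lconv :: "(real^'n) set \<Rightarrow> (real^'n \<Rightarrow> real) \<Rightarrow> (real^'n \<Rightarrow> real) \<Rightarrow> real^'n \<Rightarrow> real" where
  "lconv L a b l = (\<Sum>\<^sub>\<infinity>l'\<in>L. a l' * b (l - l'))"

definition l1norm :: "(real^'n) set \<Rightarrow> (real^'n \<Rightarrow> real) \<Rightarrow> real" where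
  "l1norm L c = (\<Sum>\<^sub>\<infinity>l\<in>L. \<bar>c l\<bar>)"

definition lattice_boundary :: "(real^'n) set \<Rightarrow> real \<Rightarrow> (real^'n) set \<Rightarrow> (real^'n) set" where
  "lattice_boundary L r \<Omega> = L \<inter> {x + y | x y. x \<in> frontier \<Omega> \<and> y \<in> ball 0 r}"

end

theory Submission
  imports Defs
begin


lemma lat_mem: "M *v (\<chi> i. of_int (k $ i)) \<in> lattice M"
  unfolding lattice_def by auto

lemma lat_diff:
  assumes "x \<in> lattice M" "y \<in> lattice M" shows "x - y \<in> lattice M"
proof -
  obtain a b where x: "x = M *v (\<chi> i. of_int (a $ i))" and y: "y = M *v (\<chi> i. of_int (b $ i))"
    using assms unfolding lattice_def by auto
  have "x - y = M *v ((\<chi> i. of_int (a $ i)) - (\<chi> i. of_int (b $ i)))"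
    by (simp add: x y matrix_vector_mult_diff_distrib)
  also have "(\<chi> i. of_int (a $ i)) - (\<chi> i. of_int (b $ i)) = (\<chi> i. (of_int ((a - b) $ i)::real))"
    by (simp add: vec_eq_iff)
  finally show ?thesis using lat_mem by metis
qed

lemma lat_zero: "0 \<in> lattice M"
  using lat_mem[of M 0] by (simp add: vec_eq_iff zero_vec_def[symmetric])

lemma tile_exists:
  assumes "invertible M"
  shows "\<exists>q\<in>lattice M. x - q \<in> fund_domain M"
proof -
  obtain B where MB: "M ** B = mat 1" using assms invertible_right_inverse by blast
  define v where "v = B *v x"
  define k where "k = (\<chi> i. floor (v $ i))"
  define a where "a = v - (\<chi> i. (of_int (k $ i)::real))"
  have Mv: "M *v v = x" by (simp add: v_def matrix_vector_mul_assoc MB)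
  define q where "q = M *v (\<chi> i. (of_int (k $ i)::real))"
  have q: "q \<in> lattice M" unfolding q_def by (rule lat_mem)
  have "x - q = M *v a"
    by (simp add: a_def q_def Mv[symmetric] matrix_vector_mult_diff_distrib)
  moreover have "\<forall>i. 0 \<le> a $ i \<and> a $ i < 1"
    by (simp add: a_def k_def) linarith
  ultimately have "x - q \<in> fund_domain M" unfolding fund_domain_def by auto
  with q show ?thesis by blast
qed

lemma tile_unique:
  assumes "invertible M" "x - q \<in> fund_domain M" "y - q \<in> fund_domain M" "x - y \<in> lattice M"
  shows "x = y"
proof -
  obtain a where a: "x - q = M *v a" "\<forall>i. 0 \<le> a $ i \<and> a $ i < 1"
    using assms(2) unfolding fund_domain_def by auto
  obtain b where b: "y - q = M *v b" "\<forall>i. 0 \<le> b $ i \<and> b $ i < 1"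
    using assms(3) unfolding fund_domain_def by auto
  obtain k where k: "x - y = M *v (\<chi> i. of_int (k $ i))"
    using assms(4) unfolding lattice_def by auto
  have inj: "inj ((*v) M)"
    using assms(1) invertible_left_inverse matrix_left_invertible_injective by blast
  have "M *v (a - b) = M *v (\<chi> i. of_int (k $ i))"
    by (simp add: matrix_vector_mult_diff_distrib a(1)[symmetric] b(1)[symmetric] k[symmetric])
  hence ab: "a - b = (\<chi> i. of_int (k $ i))" using inj by (meson injD)
  have "k $ i = 0" for i
  proof -
    have "a $ i - b $ i = of_int (k $ i)" using ab by (metis vec_lambda_beta vector_minus_component)
    moreover have "a $ i - b $ i < 1" "a $ i - b $ i > -1" using a(2) b(2) by (smt (verit))+
    ultimately show ?thesis by (smt (verit) of_int_less_iff of_int_minus of_int_1 int_one_le_iff_zero_less)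
  qed
  hence "(\<chi> i. (of_int (k $ i)::real)) = 0" by (simp add: vec_eq_iff)
  thus ?thesis using k by simp
qed

lemma fund_bounded: "bounded (fund_domain M)"
proof -
  have "bounded {x::real^'n. \<forall>i. 0 \<le> x $ i \<and> x $ i < 1}"
    unfolding bounded_iff
  proof (intro exI ballI)
    fix x :: "real^'n" assume "x \<in> {x. \<forall>i. 0 \<le> x $ i \<and> x $ i < 1}"
    hence "0 \<le> x $ i \<and> x $ i < 1" for i by auto
    hence "\<bar>x $ i\<bar> \<le> 1" for i by (simp add: abs_of_nonneg less_imp_le)
    hence "sum (\<lambda>i. \<bar>x$i\<bar>) UNIV \<le> sum (\<lambda>i. 1) (UNIV::'n set)" by (intro sum_mono) auto
    thus "norm x \<le> real CARD('n)" using norm_le_l1_cart[of x] by simp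
  qed
  thus ?thesis unfolding fund_domain_def
    by (intro bounded_linear_image) auto
qed

lemma fund_zero: "0 \<in> fund_domain M"
  unfolding fund_domain_def by (auto intro!: image_eqI[where x=0])

lemma fund_norm: "a \<in> fund_domain M \<Longrightarrow> norm a \<le> lM M"
  using diameter_bounded_bound[OF fund_bounded fund_zero, of a M] unfolding lM_def by (simp add: dist_norm)

lemma lM_nonneg: "lM M \<ge> 0"
  using fund_norm[OF fund_zero, of M] by simp

lemma finite_box: "finite {k::int^'n. \<forall>i. \<bar>k $ i\<bar> \<le> B}"
proof -
  have "{k::int^'n. \<forall>i. \<bar>k $ i\<bar> \<le> B} \<subseteq> vec_lambda ` (PiE UNIV (\<lambda>_. {-B..B}))"
  proof
    fix k :: "int^'n" assume "k \<in> {k::int^'n. \<forall>i. \<bar>k $ i\<bar> \<le> B}"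
    hence "vec_nth k \<in> PiE UNIV (\<lambda>_. {-B..B})" by (auto simp: abs_le_iff) (smt (verit))
    thus "k \<in> vec_lambda ` (PiE UNIV (\<lambda>_. {-B..B}))" by (intro image_eqI[where x="vec_nth k"]) auto
  qed
  moreover have "finite (PiE (UNIV::'n set) (\<lambda>_. {-B..B}))" by (intro finite_PiE) auto
  ultimately show ?thesis by (meson finite_imageI finite_subset)
qed

lemma lat_finite:
  fixes M :: "real^'n^'n"
  assumes "invertible M"
  shows "finite (lattice M \<inter> cball 0 R)"
proof -
  obtain B where BM: "B ** M = mat 1" using assms invertible_left_inverse by blast
  obtain K where K: "\<And>x. norm (B *v x) \<le> norm x * K"
    using bounded_linear.bounded[OF matrix_vector_mul_bounded_linear[of B]] by blast
  define Z where "Z = {k::int^'n. \<forall>i. \<bar>k $ i\<bar> \<le> ceiling (R * K)}"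
  have "lattice M \<inter> cball 0 R \<subseteq> (\<lambda>k. M *v (\<chi> i. of_int (k $ i))) ` Z"
  proof
    fix x assume x: "x \<in> lattice M \<inter> cball 0 R"
    then obtain k where k: "x = M *v (\<chi> i. of_int (k $ i))" unfolding lattice_def by auto
    have "B *v x = (\<chi> i. of_int (k $ i))" by (simp add: k matrix_vector_mul_assoc BM)
    hence "norm (\<chi> i. (of_int (k $ i)::real)) \<le> norm x * K" using K by metis
    also have "\<dots> \<le> R * K"
    proof -
      have "norm x \<le> R" using x by auto
      moreover have "K \<ge> 0" using K[of "axis undefined 1"] norm_ge_zero
        by (smt (verit) mult_nonneg_nonneg norm_ge_zero zero_le_mult_iff norm_axis_1)
      ultimately show ?thesis by (simp add: mult_right_mono)
    qed
    finally have "\<bar>(of_int (k $ i)::real)\<bar> \<le> R * K" for i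
      using component_le_norm_cart[of "(\<chi> i. (of_int (k $ i)::real))" i] by simp
    hence "\<bar>k $ i\<bar> \<le> ceiling (R * K)" for i
      by (metis ceiling_mono ceiling_of_int of_int_abs)
    hence "k \<in> Z" unfolding Z_def by auto
    thus "x \<in> (\<lambda>k. M *v (\<chi> i. of_int (k $ i))) ` Z" using k by auto
  qed
  moreover have "finite Z" unfolding Z_def by (rule finite_box)
  ultimately show ?thesis by (meson finite_imageI finite_subset)
qed


lemma subsingleton_card:
  assumes "\<And>x y. x \<in> S \<Longrightarrow> y \<in> S \<Longrightarrow> x = y"
  shows "finite S \<and> card S \<le> 1"
proof (cases "S = {}")
  case False
  then obtain x where "x \<in> S" by auto
  hence "S = {x}" using assms by auto
  thus ?thesis by simp
qed simp

lemma count_lemma: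
  fixes M :: "real^'n^'n"
  assumes inv: "invertible M" and r: "r > 0" and G: "finite G" "G \<subseteq> lattice M"
    and mu: "\<mu> \<in> lattice M"
    and Bfin: "finite (lattice_boundary (lattice M) (r + lM M) \<Omega>)"
  shows "real (card {l\<in>G. (l \<in> \<Omega>) \<noteq> (l - \<mu> \<in> \<Omega>)})
          \<le> (norm \<mu> / r + 2) * real (card (lattice_boundary (lattice M) (r + lM M) \<Omega>))"
proof -
  define Bd where "Bd = lattice_boundary (lattice M) (r + lM M) \<Omega>"
  define N where "N = nat \<lceil>norm \<mu> / r\<rceil>"
  define T where "T = (\<lambda>(k::nat, q). {l \<in> lattice M. l - (real k / real N) *\<^sub>R \<mu> - q \<in> fund_domain M})"
  define D where "D = {l\<in>G. (l \<in> \<Omega>) \<noteq> (l - \<mu> \<in> \<Omega>)}"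
  define I where "I = {..N} \<times> Bd"
  have key: "\<exists>k\<le>N. \<exists>q\<in>Bd. l \<in> T (k, q)" if l: "l \<in> D" for l
  proof -
    have lG: "l \<in> G" and ne: "(l \<in> \<Omega>) \<noteq> (l - \<mu> \<in> \<Omega>)" using l by (auto simp: D_def)
    have lL: "l \<in> lattice M" using lG G by auto
    let ?S = "closed_segment l (l - \<mu>)"
    have "?S \<inter> \<Omega> \<noteq> {}" "?S - \<Omega> \<noteq> {}"
      using ne ends_in_segment[of l "l - \<mu>"] by blast+
    then obtain z where zS: "z \<in> ?S" and zF: "z \<in> frontier \<Omega>"
      using connected_Int_frontier[OF connected_segment] by blast
    obtain u where u: "0 \<le> u" "u \<le> 1" "z = (1 - u) *\<^sub>R l + u *\<^sub>R (l - \<mu>)"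
      using zS in_segment(1) by blast
    have z: "z = l - u *\<^sub>R \<mu>" using u(3) by (simp add: algebra_simps)
    define k where "k = nat \<lfloor>u * real N\<rfloor>"
    define p where "p = l - (real k / real N) *\<^sub>R \<mu>"
    have kN: "k \<le> N" unfolding k_def
      using u by (metis floor_mono floor_of_nat mult_le_cancel_right1 nat_mono nat_int of_nat_0_le_iff
          mult_left_le_one_le)
    have dist_zp: "norm (z - p) < r"
    proof (cases "\<mu> = 0")
      case True thus ?thesis using r by (simp add: z p_def)
    next
      case False
      hence pos: "norm \<mu> / r > 0" using r by auto
      hence N1: "N \<ge> 1" unfolding N_def by linarith
      have Nge: "real N \<ge> norm \<mu> / r" unfolding N_def by linarith
      have uN: "u * real N \<ge> 0" using u by simp
      have k1: "real k \<le> u * real N" "u * real N < real k + 1"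
        unfolding k_def using uN by linarith+
      have "z - p = (real k / real N - u) *\<^sub>R \<mu>" by (simp add: z p_def algebra_simps)
      hence "norm (z - p) = \<bar>real k / real N - u\<bar> * norm \<mu>" by simp
      also have "\<bar>real k / real N - u\<bar> = \<bar>real k - u * real N\<bar> / real N"
        using N1 by (simp add: field_simps)
      also have "\<dots> < 1 / real N" using k1 N1 by (simp add: divide_strict_right_mono)
      finally have "norm (z - p) < norm \<mu> / real N"
        using False by (simp add: mult_strict_right_mono)
      also have "norm \<mu> / real N \<le> r"
        using Nge N1 r by (simp add: field_simps)
      finally show ?thesis .
    qed
    obtain q where qL: "q \<in> lattice M" and pq: "p - q \<in> fund_domain M"
      using tile_exists[OF inv] by blast
    have "norm (p - q) \<le> lM M" by (rule fund_norm[OF pq])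
    hence "norm (q - z) < r + lM M"
      using dist_zp norm_triangle_ineq[of "q - p" "p - z"] norm_minus_commute[of p q] norm_minus_commute[of z p]
      by simp
    moreover have "q = z + (q - z)" by simp
    ultimately have "q \<in> Bd" unfolding Bd_def lattice_boundary_def using qL zF
      by (metis (mono_tags, lifting) IntI mem_Collect_eq mem_ball_0)
    moreover have "l \<in> T (k, q)" unfolding T_def using lL pq by (simp add: p_def)
    ultimately show ?thesis using kN by blast
  qed
  have Tsub: "finite (T i) \<and> card (T i) \<le> 1" for i
  proof -
    obtain k q where i: "i = (k, q)" by fastforce
    show ?thesis unfolding i
    proof (rule subsingleton_card)
      fix x y assume "x \<in> T (k, q)" "y \<in> T (k, q)"
      hence "x \<in> lattice M" "y \<in> lattice M"
        "(x - (real k / real N) *\<^sub>R \<mu>) - q \<in> fund_domain M"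
        "(y - (real k / real N) *\<^sub>R \<mu>) - q \<in> fund_domain M"
        by (auto simp: T_def)
      moreover have "(x - (real k / real N) *\<^sub>R \<mu>) - (y - (real k / real N) *\<^sub>R \<mu>) = x - y" by simp
      ultimately have "x - (real k / real N) *\<^sub>R \<mu> = y - (real k / real N) *\<^sub>R \<mu>"
        using tile_unique[OF inv] lat_diff by metis
      thus "x = y" by simp
    qed
  qed
  have finI: "finite I" unfolding I_def Bd_def using Bfin by simp
  have "D \<subseteq> (\<Union>i\<in>I. T i)" using key unfolding I_def by fastforce
  hence "card D \<le> card (\<Union>i\<in>I. T i)"
    by (intro card_mono) (use finI Tsub in auto)
  also have "\<dots> \<le> (\<Sum>i\<in>I. card (T i))" by (rule card_UN_le[OF finI])
  also have "\<dots> \<le> (\<Sum>i\<in>I. 1)" by (intro sum_mono) (use Tsub in auto)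
  also have "\<dots> = (N + 1) * card Bd" unfolding I_def using Bfin Bd_def by (simp add: card_cartesian_product)
  finally have "real (card D) \<le> (real N + 1) * real (card Bd)"
    by (metis of_nat_add of_nat_le_iff of_nat_mult of_nat_1)
  also have "\<dots> \<le> (norm \<mu> / r + 2) * real (card Bd)"
  proof (intro mult_right_mono)
    have "norm \<mu> / r \<ge> 0" using r by simp
    hence "real N \<le> norm \<mu> / r + 1" unfolding N_def by linarith
    thus "real N + 1 \<le> norm \<mu> / r + 2" by simp
  qed simp
  finally show ?thesis unfolding D_def Bd_def .
qed


lemma infsum_sum_swap:
  fixes f :: "'i \<Rightarrow> 'a \<Rightarrow> real"
  assumes "finite F" "\<And>l. l \<in> F \<Longrightarrow> f l summable_on A"
  shows "(\<lambda>\<mu>. \<Sum>l\<in>F. f l \<mu>) summable_on A \<and> infsum (\<lambda>\<mu>. \<Sum>l\<in>F. f l \<mu>) A = (\<Sum>l\<in>F. infsum (f l) A)"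
  using assms
proof (induction F rule: finite_induct)
  case empty thus ?case by simp
next
  case (insert x F)
  hence IH: "(\<lambda>\<mu>. \<Sum>l\<in>F. f l \<mu>) summable_on A" "infsum (\<lambda>\<mu>. \<Sum>l\<in>F. f l \<mu>) A = (\<Sum>l\<in>F. infsum (f l) A)"
    by auto
  have fx: "f x summable_on A" using insert by auto
  have e: "(\<lambda>\<mu>. \<Sum>l\<in>insert x F. f l \<mu>) = (\<lambda>\<mu>. f x \<mu> + (\<Sum>l\<in>F. f l \<mu>))"
    using insert(1,2) by (simp add: sum.insert)
  show ?case unfolding e using insert(1,2) IH fx
    by (simp add: summable_on_add infsum_add sum.insert)
qed

lemma chi_cases: "chi \<Omega> x = 0 \<or> chi \<Omega> x = 1"
  by (simp add: chi_def)

lemma lat_bij: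
  assumes "l \<in> lattice M"
  shows "bij_betw (\<lambda>\<mu>. l - \<mu>) (lattice M) (lattice M)"
proof (rule bij_betwI[where g="\<lambda>\<mu>. l - \<mu>"])
  show "(\<lambda>\<mu>. l - \<mu>) \<in> lattice M \<rightarrow> lattice M" using lat_diff assms by blast
  show "(\<lambda>\<mu>. l - \<mu>) \<in> lattice M \<rightarrow> lattice M" using lat_diff assms by blast
qed auto

lemma conv_has_sum:
  fixes M :: "real^'n^'n"
  assumes A: "finite (\<Omega> \<inter> lattice M)" and l: "l \<in> lattice M"
  shows "((\<lambda>\<mu>. chi \<Omega> (l - \<mu>) * \<phi> \<mu>) has_sum lconv (lattice M) (chi \<Omega>) \<phi> l) (lattice M)"
proof -
  let ?f = "\<lambda>l'. chi \<Omega> l' * \<phi> (l - l')"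
  have "?f summable_on (\<Omega> \<inter> lattice M)" using A by simp
  moreover have "?f summable_on (\<Omega> \<inter> lattice M) \<longleftrightarrow> ?f summable_on lattice M"
    by (rule summable_on_cong_neutral) (auto simp: chi_def)
  ultimately have s: "?f summable_on lattice M" by blast
  have "(\<lambda>\<mu>. ?f (l - \<mu>)) summable_on lattice M"
    using summable_on_reindex_bij_betw[OF lat_bij[OF l], of ?f] s by (rule iffD2)
  moreover have "infsum (\<lambda>\<mu>. ?f (l - \<mu>)) (lattice M) = infsum ?f (lattice M)"
    by (rule infsum_reindex_bij_betw[OF lat_bij[OF l]])
  moreover have "(\<lambda>\<mu>. ?f (l - \<mu>)) = (\<lambda>\<mu>. chi \<Omega> (l - \<mu>) * \<phi> \<mu>)"
    by (rule ext) (simp add: algebra_simps)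
  ultimately show ?thesis unfolding lconv_def has_sum_iff
    by (metis (no_types, lifting))
qed


theorem proposition2p2:
  fixes d :: nat and M :: "real^'n^'n" and r :: real
  assumes "d \<ge> 1" and "CARD('n) = 2 * d"
    and "invertible M" and "r > 0"
  shows "\<exists>C::real. \<forall>(\<phi>::real^'n \<Rightarrow> real) (\<delta>::real) (\<Omega>::(real^'n) set).
           (\<forall>l\<in>lattice M. \<phi> l \<ge> 0) \<and> \<phi> summable_on lattice M \<and>
           0 \<le> \<delta> \<and> \<delta> \<le> 1 \<and>
           1 - \<delta> \<le> (\<Sum>\<^sub>\<infinity>l\<in>lattice M. \<phi> l) \<and> (\<Sum>\<^sub>\<infinity>l\<in>lattice M. \<phi> l) \<le> 1 \<and>
           (\<lambda>l. norm l * \<bar>\<phi> l\<bar>) summable_on lattice M \<and>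
           compact \<Omega>
           \<longrightarrow> (\<lambda>l. \<bar>chi \<Omega> l - lconv (lattice M) (chi \<Omega>) \<phi> l\<bar>) summable_on lattice M \<and>
               l1norm (lattice M) (\<lambda>l. chi \<Omega> l - lconv (lattice M) (chi \<Omega>) \<phi> l)
                 \<le> C * ((\<Sum>\<^sub>\<infinity>l\<in>lattice M. norm l * \<bar>\<phi> l\<bar>) + 1)
                     * real (card (lattice_boundary (lattice M) (r + lM M) \<Omega>))
                   + \<delta> * real (card (\<Omega> \<inter> lattice M))"
proof (intro exI[of _ "2 + 1/r"] allI impI, elim conjE)
  note inv = assms(3) and r = assms(4)
  fix \<phi> :: "real^'n \<Rightarrow> real" and \<delta> :: real and \<Omega> :: "(real^'n) set"
  let ?L = "lattice M"
  assume \<phi>nn: "\<forall>l\<in>?L. \<phi> l \<ge> 0" and \<phi>s: "\<phi> summable_on ?L" and \<delta>0: "0 \<le> \<delta>" and \<delta>1: "\<delta> \<le> 1"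
    and S1: "1 - \<delta> \<le> (\<Sum>\<^sub>\<infinity>l\<in>?L. \<phi> l)" and S2: "(\<Sum>\<^sub>\<infinity>l\<in>?L. \<phi> l) \<le> 1"
    and ms: "(\<lambda>l. norm l * \<bar>\<phi> l\<bar>) summable_on ?L" and K: "compact \<Omega>"
  define S where "S = (\<Sum>\<^sub>\<infinity>l\<in>?L. \<phi> l)"
  define m where "m = (\<Sum>\<^sub>\<infinity>l\<in>?L. norm l * \<bar>\<phi> l\<bar>)"
  define A where "A = \<Omega> \<inter> ?L"
  define Bd where "Bd = lattice_boundary ?L (r + lM M) \<Omega>"
  define g where "g = (\<lambda>l. chi \<Omega> l - lconv ?L (chi \<Omega>) \<phi> l)"
  define bound where "bound = (2 + 1/r) * (m + 1) * real (card Bd) + \<delta> * real (card A)"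
  obtain R where R: "\<forall>x\<in>\<Omega>. norm x \<le> R" using compact_imp_bounded[OF K] bounded_iff by blast
  have Afin: "finite A"
  proof -
    have "A \<subseteq> ?L \<inter> cball 0 R" using R unfolding A_def by auto
    thus ?thesis using lat_finite[OF inv, of R] finite_subset by blast
  qed
  have Bfin: "finite Bd"
  proof -
    have fr: "frontier \<Omega> \<subseteq> \<Omega>" using K by (simp add: compact_imp_closed frontier_subset_closed)
    have "Bd \<subseteq> ?L \<inter> cball 0 (R + (r + lM M))"
    proof
      fix q assume "q \<in> Bd"
      then obtain x y where q: "q \<in> ?L" "q = x + y" "x \<in> frontier \<Omega>" "y \<in> ball 0 (r + lM M)"
        unfolding Bd_def lattice_boundary_def by blast
      have "norm x \<le> R" using q(3) fr R by auto
      moreover have "norm y < r + lM M" using q(4) by simp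
      ultimately have "norm q \<le> R + (r + lM M)" using q(2) norm_triangle_ineq[of x y] by simp
      thus "q \<in> ?L \<inter> cball 0 (R + (r + lM M))" using q(1) by simp
    qed
    thus ?thesis using lat_finite[OF inv, of "R + (r + lM M)"] finite_subset by blast
  qed
  have m0: "m \<ge> 0" unfolding m_def by (rule infsum_nonneg) simp
  define h where "h = (\<lambda>l \<mu>. \<bar>chi \<Omega> l - chi \<Omega> (l - \<mu>)\<bar> * \<phi> \<mu>)"
  have hle: "0 \<le> h l \<mu> \<and> h l \<mu> \<le> \<phi> \<mu>" if "\<mu> \<in> ?L" for l \<mu>
  proof -
    have "\<bar>chi \<Omega> l - chi \<Omega> (l - \<mu>)\<bar> \<le> 1" by (simp add: chi_def)
    thus ?thesis using \<phi>nn that unfolding h_def by (simp add: mult_left_le_one_le)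
  qed
  have hs: "h l summable_on ?L" for l
    by (rule summable_on_comparison_test[OF \<phi>s]) (use hle in auto)
  have pt: "\<bar>g l\<bar> \<le> chi \<Omega> l * (1 - S) + infsum (h l) ?L" if l: "l \<in> ?L" for l
  proof -
    let ?c = "lconv ?L (chi \<Omega>) \<phi> l"
    have c: "((\<lambda>\<mu>. chi \<Omega> (l - \<mu>) * \<phi> \<mu>) has_sum ?c) ?L"
      using conv_has_sum[of \<Omega> M l \<phi>] Afin l unfolding A_def by blast
    have c': "((\<lambda>\<mu>. - (chi \<Omega> (l - \<mu>) * \<phi> \<mu>)) has_sum (- ?c)) ?L"
      by (subst has_sum_uminus) (simp add: c)
    have a: "((\<lambda>\<mu>. chi \<Omega> l * \<phi> \<mu>) has_sum (chi \<Omega> l * S)) ?L"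
      unfolding S_def using \<phi>s by (intro has_sum_cmult_right) simp
    define k where "k = (\<lambda>\<mu>. chi \<Omega> l * \<phi> \<mu> + - (chi \<Omega> (l - \<mu>) * \<phi> \<mu>))"
    have ks: "(k has_sum (chi \<Omega> l * S + - ?c)) ?L"
      unfolding k_def by (rule has_sum_add[OF a c'])
    have kn: "norm (k \<mu>) = h l \<mu>" if "\<mu> \<in> ?L" for \<mu>
    proof -
      have "k \<mu> = (chi \<Omega> l - chi \<Omega> (l - \<mu>)) * \<phi> \<mu>" unfolding k_def by (simp add: algebra_simps)
      thus ?thesis using \<phi>nn that unfolding h_def by (simp add: abs_mult)
    qed
    have kabs: "(\<lambda>\<mu>. norm (k \<mu>)) summable_on ?L"
      using hs[of l] summable_on_cong[of ?L "\<lambda>\<mu>. norm (k \<mu>)" "h l"] kn by blast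
    have "\<bar>chi \<Omega> l * S - ?c\<bar> = norm (infsum k ?L)"
      using ks by (simp add: has_sum_iff)
    also have "\<dots> \<le> infsum (\<lambda>\<mu>. norm (k \<mu>)) ?L" by (rule norm_infsum_bound[OF kabs])
    also have "\<dots> = infsum (h l) ?L" by (rule infsum_cong) (use kn in auto)
    finally have e: "\<bar>chi \<Omega> l * S - ?c\<bar> \<le> infsum (h l) ?L" .
    have "g l = chi \<Omega> l * (1 - S) + (chi \<Omega> l * S - ?c)" unfolding g_def by (simp add: algebra_simps)
    moreover have "chi \<Omega> l * (1 - S) \<ge> 0" using S2 unfolding S_def by (simp add: chi_def)
    ultimately show ?thesis using e by linarith
  qed
  have fin: "sum (\<lambda>l. \<bar>g l\<bar>) F \<le> bound" if F: "finite F" "F \<subseteq> ?L" for F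
  proof -
    have "sum (\<lambda>l. \<bar>g l\<bar>) F \<le> sum (\<lambda>l. chi \<Omega> l * (1 - S) + infsum (h l) ?L) F"
      using pt F by (intro sum_mono) auto
    also have "\<dots> = (1 - S) * sum (chi \<Omega>) F + sum (\<lambda>l. infsum (h l) ?L) F"
      by (simp add: sum.distrib sum_distrib_left mult.commute)
    also have "sum (chi \<Omega>) F \<le> real (card A)"
    proof -
      have ce: "chi \<Omega> = (\<lambda>x. if x \<in> \<Omega> then 1 else 0)" by (rule ext) (simp add: chi_def)
      have "sum (chi \<Omega>) F = sum (\<lambda>_. 1) (F \<inter> \<Omega>)"
        unfolding ce by (rule sum.inter_restrict[OF F(1), symmetric])
      also have "\<dots> = real (card (F \<inter> \<Omega>))" by simp
      also have "\<dots> \<le> real (card A)" using F Afin unfolding A_def by (intro of_nat_mono card_mono) auto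
      finally show ?thesis .
    qed
    hence "(1 - S) * sum (chi \<Omega>) F \<le> \<delta> * real (card A)"
    proof -
      have S0: "1 - S \<ge> 0" "1 - S \<le> \<delta>" using S1 S2 unfolding S_def by auto
      hence "(1 - S) * sum (chi \<Omega>) F \<le> (1 - S) * real (card A)"
        using S0 \<open>sum (chi \<Omega>) F \<le> real (card A)\<close> by (intro mult_left_mono) auto
      also have "\<dots> \<le> \<delta> * real (card A)"
        using \<open>1 - S \<le> \<delta>\<close> by (rule mult_right_mono) simp
      finally show ?thesis .
    qed
    also have "sum (\<lambda>l. infsum (h l) ?L) F = infsum (\<lambda>\<mu>. \<Sum>l\<in>F. h l \<mu>) ?L"
      using infsum_sum_swap[OF F(1), of h ?L] hs by simp
    also have "\<dots> \<le> infsum (\<lambda>\<mu>. (real (card Bd) / r) * (norm \<mu> * \<bar>\<phi> \<mu>\<bar>) + (2 * real (card Bd)) * \<phi> \<mu>) ?L"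
    proof (rule infsum_mono)
      show "(\<lambda>\<mu>. \<Sum>l\<in>F. h l \<mu>) summable_on ?L"
        using infsum_sum_swap[OF F(1), of h ?L] hs by simp
      show "(\<lambda>\<mu>. (real (card Bd) / r) * (norm \<mu> * \<bar>\<phi> \<mu>\<bar>) + (2 * real (card Bd)) * \<phi> \<mu>) summable_on ?L"
        by (intro summable_on_add summable_on_cmult_right ms \<phi>s)
      fix \<mu> assume mu: "\<mu> \<in> ?L"
      have "(\<Sum>l\<in>F. h l \<mu>) = (\<Sum>l\<in>F. (if (l \<in> \<Omega>) \<noteq> (l - \<mu> \<in> \<Omega>) then 1 else 0)) * \<phi> \<mu>"
        unfolding h_def sum_distrib_right by (intro sum.cong) (auto simp: chi_def)
      also have "(\<Sum>l\<in>F. (if (l \<in> \<Omega>) \<noteq> (l - \<mu> \<in> \<Omega>) then 1 else (0::real)))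
          = real (card {l\<in>F. (l \<in> \<Omega>) \<noteq> (l - \<mu> \<in> \<Omega>)})"
        using sum.inter_filter[OF F(1), of "\<lambda>_. (1::real)" "\<lambda>l. (l \<in> \<Omega>) \<noteq> (l - \<mu> \<in> \<Omega>)", symmetric]
        by (simp only: real_of_card)
      also have "\<dots> * \<phi> \<mu> \<le> ((norm \<mu> / r + 2) * real (card Bd)) * \<phi> \<mu>"
        using count_lemma[OF inv r F(1) F(2) mu Bfin[unfolded Bd_def]] \<phi>nn mu unfolding Bd_def
        by (intro mult_right_mono) auto
      also have "\<dots> = (real (card Bd) / r) * (norm \<mu> * \<bar>\<phi> \<mu>\<bar>) + (2 * real (card Bd)) * \<phi> \<mu>"
        using \<phi>nn mu r by (simp add: field_simps)
      finally show "(\<Sum>l\<in>F. h l \<mu>) \<le> (real (card Bd) / r) * (norm \<mu> * \<bar>\<phi> \<mu>\<bar>) + (2 * real (card Bd)) * \<phi> \<mu>" .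
    qed
    also have "\<dots> = (real (card Bd) / r) * m + (2 * real (card Bd)) * S"
      unfolding m_def S_def
      by (subst infsum_add) (auto intro!: summable_on_cmult_right ms \<phi>s simp only: infsum_cmult_right')
    also have "\<dots> \<le> (2 + 1/r) * (m + 1) * real (card Bd)"
    proof -
      have "(2 * real (card Bd)) * S \<le> 2 * real (card Bd)" using S2 unfolding S_def by (intro mult_left_le) auto
      moreover have "(2 + 1/r) * (m + 1) * real (card Bd)
         = (real (card Bd) / r) * m + 2 * real (card Bd) + (2 * m + 1 / r) * real (card Bd)"
        using r by (simp add: field_simps)
      moreover have "(2 * m + 1 / r) * real (card Bd) \<ge> 0" using m0 r by simp
      ultimately show ?thesis by linarith
    qed
    finally show ?thesis unfolding bound_def by linarith
  qed
  have summ: "(\<lambda>l. \<bar>g l\<bar>) summable_on ?L"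
  proof (rule nonneg_bdd_above_summable_on)
    show "bdd_above (sum (\<lambda>l. \<bar>g l\<bar>) ` {F. F \<subseteq> ?L \<and> finite F})"
      using fin by (intro bdd_aboveI[where M=bound]) auto
  qed simp
  have "l1norm ?L g \<le> bound"
    unfolding l1norm_def by (rule infsum_le_finite_sums[OF summ fin])
  thus "(\<lambda>l. \<bar>chi \<Omega> l - lconv (lattice M) (chi \<Omega>) \<phi> l\<bar>) summable_on lattice M \<and>
         l1norm (lattice M) (\<lambda>l. chi \<Omega> l - lconv (lattice M) (chi \<Omega>) \<phi> l)
           \<le> (2 + 1 / r) * ((\<Sum>\<^sub>\<infinity>l\<in>lattice M. norm l * \<bar>\<phi> l\<bar>) + 1)
               * real (card (lattice_boundary (lattice M) (r + lM M) \<Omega>))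
             + \<delta> * real (card (\<Omega> \<inter> lattice M))"
    using summ unfolding g_def bound_def m_def Bd_def A_def by simp
qed

end
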